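(* Every vulnerable directed $st$-graph is edge-weak.
   Context: A directed $st$-graph $G=(V,E,s,t)$ is a finite directed graph with no self-loops and no parallel edges, with distinct source $s$ (no incoming edges) and sink $t$ (no outgoing edges), such that every vertex lies on some directed walk from $s$ to $t$. Vulnerability: $P(G)$ is the set of directed $s$–$t$ walks; a flow is a finitely supported $\varphi:P(G)\to\mathbb{R}_{\ge0}$ inducing $\varphi(e)=\sum_p(\text{occurrences of }e\text{ in }p)\varphi(p)$; a latency function assigns each edge a continuous non-decreasing $l_e:\mathbb{R}_{\ge0}\to\mathbb{R}_{\ge0}$ with $l_p(\varphi)=\sum_{e\in p}l_e(\varphi(e))$; $\varphi$ of total value $r$ is a Wardrop flow for $(G,r,l)$ if $l_p(\varphi)\le l_q(\varphi)$ whenever $\varphi(p)>0$; $L(G,r,l)$ is the common latency of used paths ($0$ if $r=0$); $G$ is vulnerable if $L(G,r,l)>L(H,r,l|_H)$ for some $r$, $l$ and subgraph $H$ with the same source and sink. Edge-weakness: given capacities $c:E\to\mathbb{R}_{\ge0}$, a flow is $f:E\to\mathbb{R}_{\ge0}$ with $f(e)\le c_e$ and conservation at vertices other than $s,t$, of value $\sum_{e\in out(s)}f(e)$; $f$ is saturating if every $s$–$t$ walk contains an edge with $f(e)=c_e$; $G$ is edge-weak if for some capacities there is a saturating flow of value strictly less than the maximum flow value. *)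

theory Defs
  imports "HOL-Analysis.Analysis"
begin

text \<open>A graph is given by a vertex set V and an edge relation E (a set of ordered pairs,
so there are no parallel edges).\<close>

definition st_graph :: "'v set \<Rightarrow> ('v \<times> 'v) set \<Rightarrow> 'v \<Rightarrow> 'v \<Rightarrow> bool" where
  "st_graph V E s t \<longleftrightarrow>
     finite V \<and> E \<subseteq> V \<times> V \<and> (\<forall>v. (v, v) \<notin> E) \<and>
     s \<in> V \<and> t \<in> V \<and> s \<noteq> t \<and>
     (\<forall>(u, v) \<in> E. v \<noteq> s) \<and> (\<forall>(u, v) \<in> E. u \<noteq> t) \<and>
     (\<forall>x \<in> V. \<exists>p. p \<noteq> [] \<and> hd p = s \<and> last p = t \<and> set (zip p (tl p)) \<subseteq> E \<and> x \<in> set p)"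

definition walk_edges :: "'v list \<Rightarrow> ('v \<times> 'v) list" where
  "walk_edges p = zip p (tl p)"

definition st_walks :: "('v \<times> 'v) set \<Rightarrow> 'v \<Rightarrow> 'v \<Rightarrow> 'v list set" where
  "st_walks E s t = {p. p \<noteq> [] \<and> hd p = s \<and> last p = t \<and> set (walk_edges p) \<subseteq> E}"

definition latency_fun :: "('v \<times> 'v) set \<Rightarrow> ('v \<times> 'v \<Rightarrow> real \<Rightarrow> real) \<Rightarrow> bool" where
  "latency_fun E l \<longleftrightarrow> (\<forall>e \<in> E. continuous_on {0..} (l e) \<and> mono_on {0..} (l e) \<and>
                                  (\<forall>x \<ge> 0. l e x \<ge> 0))"

definition path_flow :: "('v \<times> 'v) set \<Rightarrow> 'v \<Rightarrow> 'v \<Rightarrow> ('v list \<Rightarrow> real) \<Rightarrow> bool" where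
  "path_flow E s t \<phi> \<longleftrightarrow> finite {p. \<phi> p \<noteq> 0} \<and> (\<forall>p. \<phi> p \<ge> 0) \<and>
                         {p. \<phi> p \<noteq> 0} \<subseteq> st_walks E s t"

definition flow_value :: "('v list \<Rightarrow> real) \<Rightarrow> real" where
  "flow_value \<phi> = (\<Sum>p \<in> {p. \<phi> p \<noteq> 0}. \<phi> p)"

definition edge_load :: "('v list \<Rightarrow> real) \<Rightarrow> 'v \<times> 'v \<Rightarrow> real" where
  "edge_load \<phi> e = (\<Sum>p \<in> {p. \<phi> p \<noteq> 0}. real (count_list (walk_edges p) e) * \<phi> p)"

definition path_latency :: "('v \<times> 'v \<Rightarrow> real \<Rightarrow> real) \<Rightarrow> ('v list \<Rightarrow> real) \<Rightarrow> 'v list \<Rightarrow> real" where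
  "path_latency l \<phi> p = sum_list (map (\<lambda>e. l e (edge_load \<phi> e)) (walk_edges p))"

definition wardrop_flow ::
  "('v \<times> 'v) set \<Rightarrow> 'v \<Rightarrow> 'v \<Rightarrow> real \<Rightarrow> ('v \<times> 'v \<Rightarrow> real \<Rightarrow> real) \<Rightarrow> ('v list \<Rightarrow> real) \<Rightarrow> bool" where
  "wardrop_flow E s t r l \<phi> \<longleftrightarrow> path_flow E s t \<phi> \<and> flow_value \<phi> = r \<and>
     (\<forall>p \<in> st_walks E s t. \<forall>q \<in> st_walks E s t. \<phi> p > 0 \<longrightarrow> path_latency l \<phi> p \<le> path_latency l \<phi> q)"

text \<open>The common latency of the used paths of a Wardrop flow (0 for the zero flow).\<close>
definition wardrop_latency :: "('v \<times> 'v \<Rightarrow> real \<Rightarrow> real) \<Rightarrow> ('v list \<Rightarrow> real) \<Rightarrow> real" where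
  "wardrop_latency l \<phi> = (if flow_value \<phi> = 0 then 0 else path_latency l \<phi> (SOME p. \<phi> p > 0))"

text \<open>L(.,r,l) is the common latency of any Wardrop flow
(well defined since all Wardrop flows have the same latency).\<close>
definition vulnerable :: "'v set \<Rightarrow> ('v \<times> 'v) set \<Rightarrow> 'v \<Rightarrow> 'v \<Rightarrow> bool" where
  "vulnerable V E s t \<longleftrightarrow>
     (\<exists>r l H \<phi> \<psi>. r \<ge> 0 \<and> latency_fun E l \<and> H \<subseteq> E \<and>
        wardrop_flow E s t r l \<phi> \<and> wardrop_flow H s t r l \<psi> \<and>
        wardrop_latency l \<phi> > wardrop_latency l \<psi>)"

definition edge_flow ::
  "'v set \<Rightarrow> ('v \<times> 'v) set \<Rightarrow> 'v \<Rightarrow> 'v \<Rightarrow> ('v \<times> 'v \<Rightarrow> real) \<Rightarrow> ('v \<times> 'v \<Rightarrow> real) \<Rightarrow> bool" where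
  "edge_flow V E s t c f \<longleftrightarrow>
     (\<forall>e \<in> E. 0 \<le> f e \<and> f e \<le> c e) \<and>
     (\<forall>v \<in> V - {s, t}. (\<Sum>e \<in> {e \<in> E. snd e = v}. f e) = (\<Sum>e \<in> {e \<in> E. fst e = v}. f e))"

definition edge_flow_value :: "('v \<times> 'v) set \<Rightarrow> 'v \<Rightarrow> ('v \<times> 'v \<Rightarrow> real) \<Rightarrow> real" where
  "edge_flow_value E s f = (\<Sum>e \<in> {e \<in> E. fst e = s}. f e)"

definition saturating ::
  "('v \<times> 'v) set \<Rightarrow> 'v \<Rightarrow> 'v \<Rightarrow> ('v \<times> 'v \<Rightarrow> real) \<Rightarrow> ('v \<times> 'v \<Rightarrow> real) \<Rightarrow> bool" where
  "saturating E s t c f \<longleftrightarrow> (\<forall>p \<in> st_walks E s t. \<exists>e \<in> set (walk_edges p). f e = c e)"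

text \<open>Value strictly less than the maximum flow value, i.e. some flow has larger value.\<close>
definition edge_weak :: "'v set \<Rightarrow> ('v \<times> 'v) set \<Rightarrow> 'v \<Rightarrow> 'v \<Rightarrow> bool" where
  "edge_weak V E s t \<longleftrightarrow>
     (\<exists>c f g. (\<forall>e \<in> E. c e \<ge> 0) \<and> edge_flow V E s t c f \<and> saturating E s t c f \<and>
              edge_flow V E s t c g \<and> edge_flow_value E s f < edge_flow_value E s g)"

end

theory Submission
  imports Defs
begin

lemma we_simps[simp]: "walk_edges [] = []" "walk_edges [x] = []"
  "walk_edges (x # y # ys) = (x, y) # walk_edges (y # ys)"
  by (simp_all add: walk_edges_def)

lemma we_append: "w1 \<noteq> [] \<Longrightarrow> last w1 = v \<Longrightarrow> walk_edges (w1 @ w2) = walk_edges w1 @ walk_edges (v # w2)"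
proof (induction w1)
  case Nil thus ?case by simp
next
  case (Cons x xs) thus ?case by (cases xs) auto
qed

lemma edge_split: "(u, x) \<in> set (walk_edges q) \<Longrightarrow> \<exists>a b. q = a @ u # x # b"
proof (induction q)
  case Nil thus ?case by simp
next
  case (Cons y ys)
  show ?case
  proof (cases ys)
    case Nil thus ?thesis using Cons by simp
  next
    case (Cons z zs)
    show ?thesis
    proof (cases "(u, x) = (y, z)")
      case True thus ?thesis using Cons by (intro exI[of _ "[]"] exI[of _ zs]) auto
    next
      case False
      then have "(u, x) \<in> set (walk_edges ys)" using Cons \<open>(u, x) \<in> set (walk_edges (y # ys))\<close> by auto
      then obtain a b where "ys = a @ u # x # b" using Cons.IH by blast
      thus ?thesis by (intro exI[of _ "y # a"] exI[of _ b]) auto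
    qed
  qed
qed

lemma map_snd_we: "map snd (walk_edges p) = tl p"
  by (simp add: walk_edges_def map_snd_zip_take)

lemma map_fst_we: "map fst (walk_edges p) = butlast p"
  by (simp add: walk_edges_def map_fst_zip_take butlast_conv_take)

lemma count_map_filter: "count_list (map f xs) v = length (filter (\<lambda>e. f e = v) xs)"
  by (induction xs) auto

lemma count_tl: "p \<noteq> [] \<Longrightarrow> hd p \<noteq> v \<Longrightarrow> count_list (tl p) v = count_list p v"
  by (cases p) auto

lemma count_butlast: "p \<noteq> [] \<Longrightarrow> last p \<noteq> v \<Longrightarrow> count_list (butlast p) v = count_list p v"
  by (metis append_butlast_last_id count_list.simps count_list_append add_0_right)

lemma sum_count_filter:
  "finite A \<Longrightarrow> set xs \<subseteq> A \<Longrightarrow> (\<Sum>e\<in>{e\<in>A. P e}. real (count_list xs e)) = real (length (filter P xs))"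
proof (induction xs)
  case Nil thus ?case by simp
next
  case (Cons x xs)
  have "(\<Sum>e\<in>{e\<in>A. P e}. real (count_list (x # xs) e)) =
        (\<Sum>e\<in>{e\<in>A. P e}. (if x = e then 1 else 0) + real (count_list xs e))"
    by (intro sum.cong) auto
  also have "\<dots> = (\<Sum>e\<in>{e\<in>A. P e}. (if x = e then 1 else 0)) + (\<Sum>e\<in>{e\<in>A. P e}. real (count_list xs e))"
    by (rule sum.distrib)
  also have "(\<Sum>e\<in>{e\<in>A. P e}. (if x = e then 1 else (0::real))) = (if P x then 1 else 0)"
    using Cons.prems Cons.IH by (simp add: sum.delta)
  finally show ?case using Cons by auto
qed

lemma load_sum:
  assumes "finite E" "path_flow E' s t \<phi>" "E' \<subseteq> E"
  shows "(\<Sum>e\<in>{e\<in>E. P e}. edge_load \<phi> e) =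
         (\<Sum>p\<in>{p. \<phi> p \<noteq> 0}. \<phi> p * real (length (filter P (walk_edges p))))"
proof -
  have fin: "finite {p. \<phi> p \<noteq> 0}" using assms(2) by (simp add: path_flow_def)
  have "(\<Sum>e\<in>{e\<in>E. P e}. edge_load \<phi> e) =
        (\<Sum>p\<in>{p. \<phi> p \<noteq> 0}. \<Sum>e\<in>{e\<in>E. P e}. real (count_list (walk_edges p) e) * \<phi> p)"
    unfolding edge_load_def by (rule sum.swap)
  also have "\<dots> = (\<Sum>p\<in>{p. \<phi> p \<noteq> 0}. \<phi> p * real (length (filter P (walk_edges p))))"
  proof (rule sum.cong[OF refl])
    fix p assume "p \<in> {p. \<phi> p \<noteq> 0}"
    then have "set (walk_edges p) \<subseteq> E" using assms(2,3) unfolding path_flow_def st_walks_def by blast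
    then have "(\<Sum>e\<in>{e\<in>E. P e}. real (count_list (walk_edges p) e)) = real (length (filter P (walk_edges p)))"
      using sum_count_filter[OF assms(1)] by blast
    then show "(\<Sum>e\<in>{e\<in>E. P e}. real (count_list (walk_edges p) e) * \<phi> p) = \<phi> p * real (length (filter P (walk_edges p)))"
      by (simp add: sum_distrib_right[symmetric] sum_distrib_left[symmetric] mult.commute)
  qed
  finally show ?thesis .
qed

lemma conservation:
  assumes "finite E" "path_flow E' s t \<phi>" "E' \<subseteq> E" "v \<noteq> s" "v \<noteq> t"
  shows "(\<Sum>e\<in>{e\<in>E. snd e = v}. edge_load \<phi> e) = (\<Sum>e\<in>{e\<in>E. fst e = v}. edge_load \<phi> e)"
proof -
  have "(\<Sum>e\<in>{e\<in>E. snd e = v}. edge_load \<phi> e) = (\<Sum>p\<in>{p. \<phi> p \<noteq> 0}. \<phi> p * real (count_list p v))"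
  proof -
    have "(\<Sum>e\<in>{e\<in>E. snd e = v}. edge_load \<phi> e) = (\<Sum>p\<in>{p. \<phi> p \<noteq> 0}. \<phi> p * real (length (filter (\<lambda>e. snd e = v) (walk_edges p))))"
      by (rule load_sum[OF assms(1-3)])
    also have "\<dots> = (\<Sum>p\<in>{p. \<phi> p \<noteq> 0}. \<phi> p * real (count_list p v))"
    proof (rule sum.cong[OF refl])
      fix p assume "p \<in> {p. \<phi> p \<noteq> 0}"
      then have "p \<noteq> []" "hd p = s" using assms(2) by (auto simp: path_flow_def st_walks_def)
      then show "\<phi> p * real (length (filter (\<lambda>e. snd e = v) (walk_edges p))) = \<phi> p * real (count_list p v)"
        using count_map_filter[of snd "walk_edges p" v] map_snd_we[of p] count_tl[of p v] assms(4) by simp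
    qed
    finally show ?thesis .
  qed
  moreover have "(\<Sum>e\<in>{e\<in>E. fst e = v}. edge_load \<phi> e) = (\<Sum>p\<in>{p. \<phi> p \<noteq> 0}. \<phi> p * real (count_list p v))"
  proof -
    have "(\<Sum>e\<in>{e\<in>E. fst e = v}. edge_load \<phi> e) = (\<Sum>p\<in>{p. \<phi> p \<noteq> 0}. \<phi> p * real (length (filter (\<lambda>e. fst e = v) (walk_edges p))))"
      by (rule load_sum[OF assms(1-3)])
    also have "\<dots> = (\<Sum>p\<in>{p. \<phi> p \<noteq> 0}. \<phi> p * real (count_list p v))"
    proof (rule sum.cong[OF refl])
      fix p assume "p \<in> {p. \<phi> p \<noteq> 0}"
      then have "p \<noteq> []" "last p = t" using assms(2) by (auto simp: path_flow_def st_walks_def)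
      then show "\<phi> p * real (length (filter (\<lambda>e. fst e = v) (walk_edges p))) = \<phi> p * real (count_list p v)"
        using count_map_filter[of fst "walk_edges p" v] map_fst_we[of p] count_butlast[of p v] assms(5) by simp
    qed
    finally show ?thesis .
  qed
  ultimately show ?thesis by simp
qed

lemma value_eq:
  assumes "finite E" "path_flow E' s t \<phi>" "E' \<subseteq> E" "s \<noteq> t" "\<forall>(u, v) \<in> E'. v \<noteq> s"
  shows "(\<Sum>e\<in>{e\<in>E. fst e = s}. edge_load \<phi> e) = flow_value \<phi>"
proof -
  have "(\<Sum>e\<in>{e\<in>E. fst e = s}. edge_load \<phi> e) = (\<Sum>p\<in>{p. \<phi> p \<noteq> 0}. \<phi> p * real (length (filter (\<lambda>e. fst e = s) (walk_edges p))))"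
    by (rule load_sum[OF assms(1-3)])
  also have "\<dots> = (\<Sum>p\<in>{p. \<phi> p \<noteq> 0}. \<phi> p)"
  proof (rule sum.cong[OF refl])
    fix p assume "p \<in> {p. \<phi> p \<noteq> 0}"
    then have p: "p \<noteq> []" "hd p = s" "last p = t" "set (walk_edges p) \<subseteq> E'"
      using assms(2) by (auto simp: path_flow_def st_walks_def)
    have "s \<notin> set (tl p)"
    proof
      assume "s \<in> set (tl p)"
      then have "s \<in> snd ` set (walk_edges p)" using map_snd_we[of p] by (metis list.set_map)
      then show False using p(4) assms(5) by auto
    qed
    then have "count_list (tl p) s = 0" by simp
    moreover have "count_list p s = count_list (tl p) s + 1" using p(1,2) by (cases p) auto
    ultimately have "count_list p s = 1" by simp
    then show "\<phi> p * real (length (filter (\<lambda>e. fst e = s) (walk_edges p))) = \<phi> p"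
      using count_map_filter[of fst "walk_edges p" s] map_fst_we[of p] count_butlast[of p s] assms(4) p by simp
  qed
  finally show ?thesis by (simp add: flow_value_def)
qed

lemma load_nonneg: "path_flow E' s t \<phi> \<Longrightarrow> edge_load \<phi> e \<ge> 0"
  unfolding edge_load_def path_flow_def by (intro sum_nonneg) auto

lemma load_pos:
  assumes "path_flow E' s t \<phi>" "edge_load \<phi> e > 0"
  shows "\<exists>p. \<phi> p > 0 \<and> p \<in> st_walks E' s t \<and> e \<in> set (walk_edges p)"
proof (rule ccontr)
  assume a: "\<not> ?thesis"
  have "edge_load \<phi> e = 0" unfolding edge_load_def
  proof (rule sum.neutral, rule ballI)
    fix p assume p: "p \<in> {p. \<phi> p \<noteq> 0}"
    then have "\<phi> p > 0" "p \<in> st_walks E' s t" using assms(1) unfolding path_flow_def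
      by (auto simp add: order_le_less)
    then have "e \<notin> set (walk_edges p)" using a by blast
    then show "real (count_list (walk_edges p) e) * \<phi> p = 0" by simp
  qed
  then show False using assms(2) by simp
qed

lemma lat_append: "w1 \<noteq> [] \<Longrightarrow> last w1 = v \<Longrightarrow>
  path_latency l \<phi> (w1 @ w2) = path_latency l \<phi> w1 + path_latency l \<phi> (v # w2)"
  by (simp add: path_latency_def we_append)

lemma lat_nonneg:
  assumes "latency_fun E l" "path_flow E' s t \<phi>" "set (walk_edges w) \<subseteq> E"
  shows "path_latency l \<phi> w \<ge> 0"
  unfolding path_latency_def
proof (rule sum_list_nonneg)
  fix x assume "x \<in> set (map (\<lambda>e. l e (edge_load \<phi> e)) (walk_edges w))"
  then obtain e where "e \<in> set (walk_edges w)" "x = l e (edge_load \<phi> e)" by auto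
  then show "x \<ge> 0" using assms load_nonneg[OF assms(2), of e] unfolding latency_fun_def by auto
qed

lemma we_prefix: "q1 \<noteq> [] \<Longrightarrow> set (walk_edges q1) \<subseteq> set (walk_edges (q1 @ q2))"
  using we_append[of q1 "last q1" q2] by simp

lemma we_suffix: "q1 \<noteq> [] \<Longrightarrow> set (walk_edges (last q1 # q2)) \<subseteq> set (walk_edges (q1 @ q2))"
  using we_append[of q1 "last q1" q2] by simp

lemma used_walk:
  assumes "wardrop_flow H s t r l \<psi>" "\<psi> q > 0"
  shows "q \<in> st_walks H s t"
  using assms unfolding wardrop_flow_def path_flow_def by auto

lemma shortest_prefix:
  assumes wf: "wardrop_flow H s t r l \<psi>" and q: "\<psi> q > 0" "q = q1 @ q2" "q1 \<noteq> []" "last q1 = v"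
    and w: "w \<noteq> []" "hd w = s" "last w = v" "set (walk_edges w) \<subseteq> H"
  shows "path_latency l \<psi> q1 \<le> path_latency l \<psi> w"
proof -
  have qw: "q \<in> st_walks H s t" using used_walk[OF wf q(1)] .
  have "w @ q2 \<in> st_walks H s t"
  proof -
    have "last (w @ q2) = t"
    proof (cases "q2 = []")
      case True thus ?thesis using qw q w by (simp add: st_walks_def)
    next
      case False thus ?thesis using qw q by (simp add: st_walks_def)
    qed
    moreover have "set (walk_edges (w @ q2)) \<subseteq> H"
      using we_append[OF w(1) w(3), of q2] w(4) we_suffix[OF q(3), of q2] q qw
      by (auto simp: st_walks_def)
    ultimately show ?thesis using w by (simp add: st_walks_def)
  qed
  then have "path_latency l \<psi> q \<le> path_latency l \<psi> (w @ q2)"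
    using wf q(1) qw unfolding wardrop_flow_def by blast
  moreover have "path_latency l \<psi> q = path_latency l \<psi> q1 + path_latency l \<psi> (v # q2)"
    using lat_append[OF q(3,4)] q(2) by simp
  moreover have "path_latency l \<psi> (w @ q2) = path_latency l \<psi> w + path_latency l \<psi> (v # q2)"
    using lat_append[OF w(1,3)] by simp
  ultimately show ?thesis by simp
qed

lemma main_walk:
  assumes wf: "wardrop_flow H s t r l \<psi>" and lf: "latency_fun E l" and HE: "H \<subseteq> E"
  shows "p \<noteq> [] \<Longrightarrow> hd p = s \<Longrightarrow> (\<forall>e\<in>set (walk_edges p). edge_load \<psi> e > 0) \<Longrightarrow>
    \<psi> q > 0 \<Longrightarrow> q = q1 @ q2 \<Longrightarrow> q1 \<noteq> [] \<Longrightarrow> last q1 = last p \<Longrightarrow>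
    path_latency l \<psi> p \<le> path_latency l \<psi> q1"
proof (induction p arbitrary: q q1 q2 rule: rev_induct)
  case Nil thus ?case by simp
next
  case (snoc x xs)
  have pf: "path_flow H s t \<psi>" using wf by (simp add: wardrop_flow_def)
  have qw: "q \<in> st_walks H s t" using used_walk[OF wf snoc.prems(4)] .
  have q1H: "set (walk_edges q1) \<subseteq> H" using we_prefix[OF snoc.prems(6), of q2] qw snoc.prems(5)
    by (auto simp: st_walks_def)
  have q1hd: "hd q1 = s" using qw snoc.prems(5,6) by (simp add: st_walks_def)
  show ?case
  proof (cases "xs = []")
    case True
    then have "path_latency l \<psi> (xs @ [x]) = 0" by (simp add: path_latency_def)
    moreover have "path_latency l \<psi> q1 \<ge> 0" using lat_nonneg[OF lf pf] q1H HE by auto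
    ultimately show ?thesis by simp
  next
    case False
    define u where "u = last xs"
    have we: "walk_edges (xs @ [x]) = walk_edges xs @ [(u, x)]"
      using we_append[OF False u_def[symmetric], of "[x]"] by simp
    have pos: "\<forall>e\<in>set (walk_edges xs). edge_load \<psi> e > 0" "edge_load \<psi> (u, x) > 0"
      using snoc.prems(3) we by auto
    obtain q' where q': "\<psi> q' > 0" "q' \<in> st_walks H s t" "(u, x) \<in> set (walk_edges q')"
      using load_pos[OF pf pos(2)] by blast
    obtain a b where ab: "q' = a @ u # x # b" using edge_split[OF q'(3)] by blast
    have hdxs: "hd xs = s" using snoc.prems(2) False by simp
    have IH: "path_latency l \<psi> xs \<le> path_latency l \<psi> (a @ [u])"
      using snoc.IH[OF False hdxs pos(1) q'(1), of "a @ [u]" "x # b"] ab u_def by simp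
    have "path_latency l \<psi> (xs @ [x]) = path_latency l \<psi> xs + path_latency l \<psi> [u, x]"
      using lat_append[OF False u_def[symmetric], of _ _ "[x]"] by simp
    moreover have "path_latency l \<psi> (a @ [u, x]) = path_latency l \<psi> (a @ [u]) + path_latency l \<psi> [u, x]"
      using lat_append[of "a @ [u]" u _ _ "[x]"] by simp
    moreover have "path_latency l \<psi> (a @ [u, x]) \<le> path_latency l \<psi> q1"
      by (rule shortest_prefix[OF wf q'(1), of "a @ [u, x]" b x q1])
         (use ab snoc.prems(6,7) q1hd q1H in auto)
    ultimately show ?thesis using IH by simp
  qed
qed

lemma eps_exists:
  fixes \<psi> \<phi> :: "'a \<Rightarrow> real"
  shows "finite S \<Longrightarrow> (\<forall>e\<in>S. 0 \<le> \<psi> e) \<Longrightarrow> \<exists>\<epsilon>>0. \<forall>e\<in>S. \<psi> e < \<phi> e \<longrightarrow> (1 + \<epsilon>) * \<psi> e \<le> \<phi> e"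
proof (induction S rule: finite_induct)
  case empty thus ?case by (intro exI[of _ 1]) auto
next
  case (insert x S)
  then obtain \<epsilon> where e: "\<epsilon> > 0" "\<forall>e\<in>S. \<psi> e < \<phi> e \<longrightarrow> (1 + \<epsilon>) * \<psi> e \<le> \<phi> e" by auto
  define \<delta> where "\<delta> = (if \<psi> x < \<phi> x then min \<epsilon> ((\<phi> x - \<psi> x) / (\<psi> x + 1)) else \<epsilon>)"
  have d: "\<delta> > 0" "\<delta> \<le> \<epsilon>" using e(1) insert.prems by (auto simp: \<delta>_def)
  have "\<forall>e\<in>insert x S. \<psi> e < \<phi> e \<longrightarrow> (1 + \<delta>) * \<psi> e \<le> \<phi> e"
  proof (intro ballI impI)
    fix e assume "e \<in> insert x S" "\<psi> e < \<phi> e"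
    have p: "0 \<le> \<psi> e" using insert.prems \<open>e \<in> insert x S\<close> by auto
    show "(1 + \<delta>) * \<psi> e \<le> \<phi> e"
    proof (cases "e = x")
      case True
      have "\<delta> \<le> (\<phi> x - \<psi> x) / (\<psi> x + 1)" using True \<open>\<psi> e < \<phi> e\<close> by (simp add: \<delta>_def)
      then have "\<delta> * (\<psi> x + 1) \<le> \<phi> x - \<psi> x" using p True by (simp add: pos_le_divide_eq)
      moreover have "\<delta> * \<psi> x \<le> \<delta> * (\<psi> x + 1)" using d(1) by (intro mult_left_mono) auto
      moreover have "(1 + \<delta>) * \<psi> x = \<psi> x + \<delta> * \<psi> x" by (simp add: algebra_simps)
      ultimately have "(1 + \<delta>) * \<psi> x \<le> \<phi> x" by linarith
      then show ?thesis using True by simp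
    next
      case False
      then have "(1 + \<epsilon>) * \<psi> e \<le> \<phi> e" using e(2) \<open>e \<in> insert x S\<close> \<open>\<psi> e < \<phi> e\<close> by auto
      moreover have "(1 + \<delta>) * \<psi> e \<le> (1 + \<epsilon>) * \<psi> e" using d p by (intro mult_right_mono) auto
      ultimately show ?thesis by linarith
    qed
  qed
  then show ?case using d(1) by blast
qed

lemma used_exists:
  assumes "path_flow E s t \<phi>" "flow_value \<phi> \<noteq> 0"
  shows "\<exists>p. \<phi> p > 0"
proof (rule ccontr)
  assume "\<not> ?thesis"
  then have "\<forall>p. \<phi> p = 0" using assms(1) unfolding path_flow_def by (metis antisym not_le)
  then show False using assms(2) by (simp add: flow_value_def)
qed

theorem theorem7:
  fixes V :: "'v set" and E :: "('v \<times> 'v) set" and s t :: 'v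
  assumes "st_graph V E s t" and "vulnerable V E s t"
  shows "edge_weak V E s t"
proof -
  have finE: "finite E" using assms(1) unfolding st_graph_def by (meson finite_SigmaI finite_subset)
  have st: "s \<noteq> t" "\<forall>(u, v) \<in> E. v \<noteq> s" using assms(1) unfolding st_graph_def by auto
  obtain r l H \<phi> \<psi> where v: "r \<ge> 0" "latency_fun E l" "H \<subseteq> E"
    "wardrop_flow E s t r l \<phi>" "wardrop_flow H s t r l \<psi>" "wardrop_latency l \<phi> > wardrop_latency l \<psi>"
    using assms(2) unfolding vulnerable_def by blast
  have pfG: "path_flow E s t \<phi>" and pfH: "path_flow H s t \<psi>" and vals: "flow_value \<phi> = r" "flow_value \<psi> = r"
    using v(4,5) by (auto simp: wardrop_flow_def)
  have r0: "r \<noteq> 0" using v(6) vals by (auto simp: wardrop_latency_def)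
  then have rpos: "r > 0" using v(1) by simp
  define p0 where "p0 = (SOME p. \<phi> p > 0)"
  define q0 where "q0 = (SOME p. \<psi> p > 0)"
  have p0: "\<phi> p0 > 0" unfolding p0_def using used_exists[OF pfG] vals r0 by (metis someI_ex)
  have q0: "\<psi> q0 > 0" unfolding q0_def using used_exists[OF pfH] vals r0 by (metis someI_ex)
  have LG: "wardrop_latency l \<phi> = path_latency l \<phi> p0" using vals r0 by (simp add: wardrop_latency_def p0_def)
  have LH: "wardrop_latency l \<psi> = path_latency l \<psi> q0" using vals r0 by (simp add: wardrop_latency_def q0_def)
  have q0w: "q0 \<in> st_walks H s t" using used_walk[OF v(5) q0] .
  have p0w: "p0 \<in> st_walks E s t" using used_walk[OF v(4) p0] .
  have nnG: "\<And>e. edge_load \<phi> e \<ge> 0" using load_nonneg[OF pfG] .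
  have nnH: "\<And>e. edge_load \<psi> e \<ge> 0" using load_nonneg[OF pfH] .
  obtain \<epsilon> :: real where eps: "\<epsilon> > 0" "\<forall>e\<in>E. edge_load \<psi> e < edge_load \<phi> e \<longrightarrow> (1 + \<epsilon>) * edge_load \<psi> e \<le> edge_load \<phi> e"
    using eps_exists[OF finE, of "edge_load \<psi>" "edge_load \<phi>"] nnH by blast
  define c where "c = (\<lambda>e. max (edge_load \<phi> e) ((1 + \<epsilon>) * edge_load \<psi> e))"
  define f where "f = edge_load \<phi>"
  define g where "g = (\<lambda>e. (1 + \<epsilon>) * edge_load \<psi> e)"
  have c0: "\<forall>e\<in>E. c e \<ge> 0" using nnG by (auto simp: c_def intro: max.coboundedI1)
  have ff: "edge_flow V E s t c f"
    unfolding edge_flow_def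
  proof (intro conjI ballI)
    fix e show "0 \<le> f e" "f e \<le> c e" using nnG by (auto simp: f_def c_def)
  next
    fix v assume "v \<in> V - {s, t}"
    then show "(\<Sum>e\<in>{e\<in>E. snd e = v}. f e) = (\<Sum>e\<in>{e\<in>E. fst e = v}. f e)"
      unfolding f_def using conservation[OF finE pfG order_refl] by auto
  qed
  have gf: "edge_flow V E s t c g"
    unfolding edge_flow_def
  proof (intro conjI ballI)
    fix e show "0 \<le> g e" "g e \<le> c e" using nnH eps(1) by (auto simp: g_def c_def)
  next
    fix v assume "v \<in> V - {s, t}"
    then show "(\<Sum>e\<in>{e\<in>E. snd e = v}. g e) = (\<Sum>e\<in>{e\<in>E. fst e = v}. g e)"
      unfolding g_def using conservation[OF finE pfH v(3)] by (auto simp: sum_distrib_left[symmetric])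
  qed
  have valf: "edge_flow_value E s f = r"
    using value_eq[OF finE pfG order_refl st] vals by (simp add: edge_flow_value_def f_def)
  have valg: "edge_flow_value E s g = (1 + \<epsilon>) * r"
  proof -
    have "\<forall>(u, v) \<in> H. v \<noteq> s" using st(2) v(3) by auto
    then show ?thesis using value_eq[OF finE pfH v(3) st(1)] vals
      by (simp add: edge_flow_value_def g_def sum_distrib_left[symmetric])
  qed
  have sat: "saturating E s t c f"
    unfolding saturating_def
  proof (rule ballI, rule ccontr)
    fix p assume pw: "p \<in> st_walks E s t" and a: "\<not> (\<exists>e\<in>set (walk_edges p). f e = c e)"
    have pE: "set (walk_edges p) \<subseteq> E" and p: "p \<noteq> []" "hd p = s" "last p = t" using pw by (auto simp: st_walks_def)
    have bad: "\<forall>e\<in>set (walk_edges p). edge_load \<psi> e > 0 \<and> edge_load \<phi> e \<le> edge_load \<psi> e"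
    proof
      fix e assume e: "e \<in> set (walk_edges p)"
      then have lt1: "edge_load \<phi> e < (1 + \<epsilon>) * edge_load \<psi> e" using a by (auto simp: f_def c_def max_def split: if_splits)
      have eE: "e \<in> E" using e pE by auto
      note lt = lt1 eE
      have p1: "edge_load \<psi> e > 0"
      proof (rule ccontr)
        assume "\<not> edge_load \<psi> e > 0"
        then have "edge_load \<psi> e = 0" using nnH[of e] by simp
        then show False using lt(1) nnG[of e] by simp
      qed
      have "\<not> edge_load \<psi> e < edge_load \<phi> e" using eps(2) lt by force
      then show "edge_load \<psi> e > 0 \<and> edge_load \<phi> e \<le> edge_load \<psi> e" using p1 by simp
    qed
    have "path_latency l \<psi> p \<le> path_latency l \<psi> q0"
      using main_walk[OF v(5) v(2) v(3) p(1) p(2) _ q0, of q0 "[]"] bad p(3) q0w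
      by (auto simp: st_walks_def)
    moreover have "path_latency l \<phi> p \<le> path_latency l \<psi> p"
      unfolding path_latency_def
    proof (rule sum_list_mono)
      fix e assume e: "e \<in> set (walk_edges p)"
      then have "e \<in> E" using pE by auto
      then have "mono_on {0..} (l e)" using v(2) by (simp add: latency_fun_def)
      then show "l e (edge_load \<phi> e) \<le> l e (edge_load \<psi> e)"
        using bad e nnG[of e] nnH[of e] by (auto intro: mono_onD)
    qed
    moreover have "path_latency l \<phi> p0 \<le> path_latency l \<phi> p"
      using v(4) p0 p0w pw unfolding wardrop_flow_def by blast
    ultimately show False using v(6) LG LH by simp
  qed
  show ?thesis unfolding edge_weak_def
  proof (rule exI[of _ c], rule exI[of _ f], rule exI[of _ g])
    have "\<epsilon> * r > 0" using rpos eps(1) by simp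
    then have "r < (1 + \<epsilon>) * r" by (simp add: distrib_right)
    then show "(\<forall>e\<in>E. 0 \<le> c e) \<and> edge_flow V E s t c f \<and> saturating E s t c f \<and>
      edge_flow V E s t c g \<and> edge_flow_value E s f < edge_flow_value E s g"
      using c0 ff sat gf valf valg by simp
  qed
qed

end
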